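(* Let $(\Omega,\mathcal F,\mathbb P)$ be a probability space. For each $N\in\mathbb N$ let $\{t_j\}_{j\in\mathbb N}=\{t_j^{(N)}\}_{j\in\mathbb N}$ be a sequence of positive random variables on it (dependence on $N$ suppressed) satisfying: (i) $\mathbb E(t_i)=\frac1N$ for all $i$ and all $N$; (ii) there exist $r>0$ and a constant $\tilde C>0$ such that $\mathbb E(t_i^{2+r})\le \frac{\tilde C}{N^{2+r}}$ for all $i$ and all $N$; (iii) for all $m\in\mathbb N$ (and all $N$), the vector $(t_1,\dots,t_m)$ is negatively superadditive dependent. Let $\tau_k=\sum_{j=1}^k t_j$. Then, almost surely as $N\to\infty$, $$\frac1N\sum_{k=1}^N\tau_k^2\to\frac13.$$
   Context: A function $\phi:\mathbb R^m\to\mathbb R$ is superadditive if $\phi(x\vee y)+\phi(x\wedge y)\ge\phi(x)+\phi(y)$ for all $x,y\in\mathbb R^m$, where $\vee$ and $\wedge$ denote componentwise maximum and minimum. A random vector $(X_1,\dots,X_m)$ is negatively superadditive dependent (NSD) if for every superadditive $\phi$ such that the expectation $\mathbb E\phi(X_1,\dots,X_m)$ exists, $\mathbb E\phi(X_1,\dots,X_m)\le\mathbb E\phi(X_1^*,\dots,X_m^* )$, where $X_1^*,\dots,X_m^*$ are independent and $X_i^*$ has the same distribution as $X_i$ for each $i$. *)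

theory Defs
  imports "HOL-Probability.Probability"
begin

text \<open>Vectors in R^m are represented as extensional functions on the index
set {1..m}, i.e. elements of PiE {1..m} (\<lambda>_. UNIV); componentwise max/min
are restricted to {1..m}.\<close>

definition vmax :: "nat \<Rightarrow> (nat \<Rightarrow> real) \<Rightarrow> (nat \<Rightarrow> real) \<Rightarrow> (nat \<Rightarrow> real)" where
  "vmax m x y = (\<lambda>i\<in>{1..m}. max (x i) (y i))"

definition vmin :: "nat \<Rightarrow> (nat \<Rightarrow> real) \<Rightarrow> (nat \<Rightarrow> real) \<Rightarrow> (nat \<Rightarrow> real)" where
  "vmin m x y = (\<lambda>i\<in>{1..m}. min (x i) (y i))"

definition superadditive :: "nat \<Rightarrow> ((nat \<Rightarrow> real) \<Rightarrow> real) \<Rightarrow> bool" where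
  "superadditive m \<phi> \<longleftrightarrow>
     (\<forall>x\<in>PiE {1..m} (\<lambda>_. UNIV). \<forall>y\<in>PiE {1..m} (\<lambda>_. UNIV).
        \<phi> (vmax m x y) + \<phi> (vmin m x y) \<ge> \<phi> x + \<phi> y)"

text \<open>The independent copy (X_1^*, ..., X_m^*) is realised by the product of the marginal
distributions.  "The expectation exists" is read as integrability on both sides.\<close>

definition NSD :: "'a measure \<Rightarrow> (nat \<Rightarrow> 'a \<Rightarrow> real) \<Rightarrow> nat \<Rightarrow> bool" where
  "NSD M X m \<longleftrightarrow>
     (\<forall>\<phi>. superadditive m \<phi> \<and>
          \<phi> \<in> borel_measurable (PiM {1..m} (\<lambda>_. borel)) \<and>
          integrable M (\<lambda>\<omega>. \<phi> (\<lambda>i\<in>{1..m}. X i \<omega>)) \<and>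
          integrable (PiM {1..m} (\<lambda>i. distr M borel (X i))) \<phi>
        \<longrightarrow> (\<integral>\<omega>. \<phi> (\<lambda>i\<in>{1..m}. X i \<omega>) \<partial>M)
              \<le> (\<integral>x. \<phi> x \<partial>(PiM {1..m} (\<lambda>i. distr M borel (X i)))))"

end

theory Submission
  imports Defs "HOL-Real_Asymp.Real_Asymp"
begin


definition clampL :: "real \<Rightarrow> real \<Rightarrow> real" where
  "clampL L x = min (max x 0) L"

lemma exp_supermod:
  fixes a b u v :: real
  assumes "u + v = a + b" "v \<le> a" "a \<le> u" "v \<le> b" "b \<le> u"
  shows "exp a + exp b \<le> exp u + exp v"
proof -
  have key: "exp a + exp b \<le> exp u + exp v" if "a \<le> b" "u + v = a + b" "v \<le> a" "b \<le> u" for a b u v :: real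
  proof -
    define d where "d = u - b"
    have d: "d \<ge> 0" "a - v = d" using that by (auto simp: d_def)
    have "exp u - exp b = exp b * (exp d - 1)" by (simp add: d_def exp_diff field_simps)
    moreover have "exp a - exp v = exp v * (exp d - 1)"
      using d(2) by (metis exp_add add.commute diff_add_cancel right_diff_distrib mult.right_neutral)
    moreover have "exp v * (exp d - 1) \<le> exp b * (exp d - 1)"
      using d that by (intro mult_right_mono) auto
    ultimately show ?thesis by linarith
  qed
  show ?thesis
  proof (cases "a \<le> b")
    case True then show ?thesis using key assms by blast
  next
    case False then show ?thesis using key[of b a u v] assms by auto
  qed
qed

lemma exp_quad:
  fixes x :: real assumes "\<bar>x\<bar> \<le> 1" shows "exp x \<le> 1 + x + x\<^sup>2"
proof (cases "x \<ge> 0")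
  case True then show ?thesis using exp_bound assms by auto
next
  case False
  define y where "y = - x"
  have y: "y > 0" using False by (simp add: y_def)
  have "exp (-y) = inverse (exp y)" by (simp add: exp_minus)
  also have "\<dots> \<le> inverse (1 + y)"
    using y by (intro le_imp_inverse_le exp_ge_add_one_self) auto
  also have "\<dots> \<le> 1 - y + y\<^sup>2"
  proof -
    have "1 \<le> (1 + y) * (1 - y + y\<^sup>2)" using y by (simp add: algebra_simps power2_eq_square power3_eq_cube)
    then show ?thesis using y by (simp add: field_simps)
  qed
  finally show ?thesis by (simp add: y_def)
qed

lemma exp_supermod_s:
  fixes G1 G2 Gx Gy s :: real
  assumes "G1 + G2 = Gx + Gy" "Gx \<le> G1" "Gy \<le> G1" "G2 \<le> Gx" "G2 \<le> Gy"
  shows "exp (s * Gx) + exp (s * Gy) \<le> exp (s * G1) + exp (s * G2)"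
proof (cases "s \<ge> 0")
  case True
  have e: "s * G1 + s * G2 = s * Gx + s * Gy" using assms(1) by (metis distrib_left)
  show ?thesis
    by (intro exp_supermod e mult_left_mono assms True)
next
  case False
  have e: "s * G2 + s * G1 = s * Gx + s * Gy" using assms(1) by (metis distrib_left add.commute)
  have "exp (s * Gx) + exp (s * Gy) \<le> exp (s * G2) + exp (s * G1)"
    by (intro exp_supermod e mult_left_mono_neg assms) (use False in auto)
  then show ?thesis by simp
qed

lemma clampL_maxmin: "clampL L (max a b) + clampL L (min a b) = clampL L a + clampL L b"
  by (cases "a \<le> b") (auto simp: clampL_def max_def min_def)

lemma clampL_mono: "a \<le> b \<Longrightarrow> clampL L a \<le> clampL L b"
  by (auto simp: clampL_def)

lemma superadd_exp:
  fixes s :: real and c :: "nat \<Rightarrow> real"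
  shows "superadditive k (\<lambda>x. exp (s * (\<Sum>i\<in>{1..k}. clampL L (x i) - c i)))"
  unfolding superadditive_def
proof (intro ballI)
  fix x y :: "nat \<Rightarrow> real"
  let ?g = "\<lambda>z. (\<Sum>i\<in>{1..k}. clampL L (z i) - c i)"
  have eq: "?g (vmax k x y) + ?g (vmin k x y) = ?g x + ?g y"
  proof -
    have "?g (vmax k x y) + ?g (vmin k x y) = (\<Sum>i\<in>{1..k}. (clampL L (vmax k x y i) - c i) + (clampL L (vmin k x y i) - c i))"
      by (rule sum.distrib[symmetric])
    also have "\<dots> = (\<Sum>i\<in>{1..k}. (clampL L (x i) - c i) + (clampL L (y i) - c i))"
    proof (intro sum.cong refl)
      fix i assume "i \<in> {1..k}"
      then show "(clampL L (vmax k x y i) - c i) + (clampL L (vmin k x y i) - c i) = (clampL L (x i) - c i) + (clampL L (y i) - c i)"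
        using clampL_maxmin[of L "x i" "y i"] by (simp add: vmax_def vmin_def)
    qed
    also have "\<dots> = ?g x + ?g y" by (rule sum.distrib)
    finally show ?thesis .
  qed
  have ge1: "?g x \<le> ?g (vmax k x y)" and ge2: "?g y \<le> ?g (vmax k x y)"
    by (auto simp: vmax_def intro!: sum_mono clampL_mono)
  have le1: "?g (vmin k x y) \<le> ?g x" and le2: "?g (vmin k x y) \<le> ?g y"
    by (auto simp: vmin_def intro!: sum_mono clampL_mono)
  show "exp (s * ?g x) + exp (s * ?g y) \<le> exp (s * ?g (vmax k x y)) + exp (s * ?g (vmin k x y))"
    by (rule exp_supermod_s[OF eq ge1 ge2 le1 le2])
qed


lemma clampL_meas[measurable]: "f \<in> borel_measurable M \<Longrightarrow> (\<lambda>x. clampL L (f x)) \<in> borel_measurable M"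
  unfolding clampL_def by measurable

lemma clampL_abs: "\<bar>clampL L x\<bar> \<le> \<bar>L\<bar>"
  by (auto simp: clampL_def)

lemma mul_le_abs_bound: fixes s z B :: real shows "\<bar>z\<bar> \<le> B \<Longrightarrow> s * z \<le> \<bar>s\<bar> * B"
  by (metis abs_ge_self abs_mult abs_ge_zero mult_left_mono order_trans)

lemma clamp_diff_bound: "\<bar>clampL L x - c\<bar> \<le> \<bar>L\<bar> + \<bar>c\<bar>"
  by (metis abs_triangle_ineq4 add_right_mono clampL_abs order_trans)

lemma exp_sum_bound:
  fixes s :: real and c :: "nat \<Rightarrow> real" and x :: "nat \<Rightarrow> real"
  shows "norm (exp (s * (\<Sum>i\<in>I. clampL L (x i) - c i))) \<le> exp (\<bar>s\<bar> * (\<Sum>i\<in>I. \<bar>L\<bar> + \<bar>c i\<bar>))"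
proof -
  have "\<bar>\<Sum>i\<in>I. clampL L (x i) - c i\<bar> \<le> (\<Sum>i\<in>I. \<bar>L\<bar> + \<bar>c i\<bar>)"
    by (rule order_trans[OF sum_abs], rule sum_mono, rule clamp_diff_bound)
  then have "s * (\<Sum>i\<in>I. clampL L (x i) - c i) \<le> \<bar>s\<bar> * (\<Sum>i\<in>I. \<bar>L\<bar> + \<bar>c i\<bar>)"
    by (rule mul_le_abs_bound)
  then show ?thesis by simp
qed

lemma nsd_mgf:
  fixes M :: "'a measure" and X :: "nat \<Rightarrow> 'a \<Rightarrow> real" and c :: "nat \<Rightarrow> real"
  assumes P: "prob_space M"
    and meas: "\<And>j. j \<ge> 1 \<Longrightarrow> X j \<in> borel_measurable M"
    and nsd: "NSD M X k"
  shows "(\<integral>\<omega>. exp (s * (\<Sum>i\<in>{1..k}. clampL L (X i \<omega>) - c i)) \<partial>M)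
         \<le> (\<Prod>i\<in>{1..k}. \<integral>\<omega>. exp (s * (clampL L (X i \<omega>) - c i)) \<partial>M)"
proof -
  interpret prob_space M by fact
  define \<phi> where "\<phi> = (\<lambda>x::nat\<Rightarrow>real. exp (s * (\<Sum>i\<in>{1..k}. clampL L (x i) - c i)))"
  define B where "B = exp (\<bar>s\<bar> * (\<Sum>i\<in>{1..k}. \<bar>L\<bar> + \<bar>c i\<bar>))"
  have bnd: "norm (\<phi> x) \<le> B" for x unfolding \<phi>_def B_def by (rule exp_sum_bound)
  have measX: "X i \<in> borel_measurable M" if "i \<in> {1..k}" for i using meas that by auto
  have mphi: "\<phi> \<in> borel_measurable (PiM {1..k} (\<lambda>_. borel))"
  proof -
    have "(\<lambda>x::nat\<Rightarrow>real. (\<Sum>i\<in>{1..k}. clampL L (x i) - c i)) \<in> borel_measurable (PiM {1..k} (\<lambda>_. borel))"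
      by (intro borel_measurable_sum borel_measurable_diff clampL_meas measurable_component_singleton borel_measurable_const) auto
    then show ?thesis unfolding \<phi>_def by measurable
  qed
  define P where "P = PiM {1..k} (\<lambda>i. distr M borel (X i))"
  have probP: "prob_space P"
    unfolding P_def by (intro prob_space_PiM prob_space_distr) (auto intro: measX)
  have setsP: "sets P = sets (PiM {1..k} (\<lambda>_. borel))"
    unfolding P_def by (intro sets_PiM_cong) auto
  have mphiP: "\<phi> \<in> borel_measurable P"
    using mphi by (simp add: measurable_cong_sets[OF setsP refl])
  have intP: "integrable P \<phi>"
    using finite_measure.integrable_const_bound[of P \<phi> B] probP mphiP bnd
    by (auto simp: prob_space_def)
  have eqM: "\<phi> (\<lambda>i\<in>{1..k}. X i \<omega>) = exp (s * (\<Sum>i\<in>{1..k}. clampL L (X i \<omega>) - c i))" for \<omega>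
    unfolding \<phi>_def by (intro arg_cong[where f=exp] arg_cong[where f="(*) s"] sum.cong) auto
  have mM: "(\<lambda>\<omega>. exp (s * (\<Sum>i\<in>{1..k}. clampL L (X i \<omega>) - c i))) \<in> borel_measurable M"
  proof -
    have "(\<lambda>\<omega>. (\<Sum>i\<in>{1..k}. clampL L (X i \<omega>) - c i)) \<in> borel_measurable M"
      by (intro borel_measurable_sum borel_measurable_diff clampL_meas measX borel_measurable_const) auto
    then show ?thesis by measurable
  qed
  have intM: "integrable M (\<lambda>\<omega>. \<phi> (\<lambda>i\<in>{1..k}. X i \<omega>))"
  proof -
    have "norm (exp (s * (\<Sum>i\<in>{1..k}. clampL L (X i \<omega>) - c i))) \<le> B" for \<omega>
      using bnd[of "\<lambda>i. X i \<omega>"] unfolding \<phi>_def .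
    then show ?thesis unfolding eqM by (intro integrable_const_bound[where B=B] AE_I2 mM)
  qed
  have "(\<integral>\<omega>. \<phi> (\<lambda>i\<in>{1..k}. X i \<omega>) \<partial>M) \<le> (\<integral>x. \<phi> x \<partial>P)"
  proof -
    have sa: "superadditive k \<phi>" unfolding \<phi>_def by (rule superadd_exp)
    have "\<forall>\<phi>. superadditive k \<phi> \<and> \<phi> \<in> borel_measurable (PiM {1..k} (\<lambda>_. borel)) \<and>
          integrable M (\<lambda>\<omega>. \<phi> (\<lambda>i\<in>{1..k}. X i \<omega>)) \<and> integrable P \<phi>
        \<longrightarrow> (\<integral>\<omega>. \<phi> (\<lambda>i\<in>{1..k}. X i \<omega>) \<partial>M) \<le> (\<integral>x. \<phi> x \<partial>P)"
      using nsd unfolding NSD_def P_def .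
    then show ?thesis using sa mphi intM intP by blast
  qed
  also have "(\<integral>x. \<phi> x \<partial>P) = (\<Prod>i\<in>{1..k}. \<integral>\<omega>. exp (s * (clampL L (X i \<omega>) - c i)) \<partial>M)"
  proof -
    define M' where "M' = (\<lambda>i. distr M borel (X (max i 1)))"
    have pM': "prob_space (M' i)" for i
      unfolding M'_def by (intro prob_space_distr) (auto intro: meas)
    interpret product_sigma_finite M'
      unfolding product_sigma_finite_def using pM' by (auto intro: prob_space_imp_sigma_finite)
    have PM': "P = PiM {1..k} M'"
      unfolding P_def M'_def by (intro PiM_cong) auto
    have phiprod: "\<phi> x = (\<Prod>i\<in>{1..k}. exp (s * (clampL L (x i) - c i)))" for x
      unfolding \<phi>_def by (simp add: sum_distrib_left exp_sum)
    have intf: "integrable (M' i) (\<lambda>y. exp (s * (clampL L y - c i)))" for i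
    proof -
      interpret pi: prob_space "M' i" by (rule pM')
      have "norm (exp (s * (clampL L y - c i))) \<le> exp (\<bar>s\<bar> * (\<bar>L\<bar> + \<bar>c i\<bar>))" for y
        using exp_sum_bound[where s=s and I="{i}" and L=L and x="\<lambda>_. y" and c=c] by simp
      then show ?thesis
        by (intro pi.integrable_const_bound[where B="exp (\<bar>s\<bar> * (\<bar>L\<bar> + \<bar>c i\<bar>))"]) (auto simp: M'_def)
    qed
    have "(\<integral>x. \<phi> x \<partial>P) = (\<Prod>i\<in>{1..k}. \<integral>y. exp (s * (clampL L y - c i)) \<partial>M' i)"
      unfolding PM' phiprod by (rule product_integral_prod[where f="\<lambda>i y. exp (s * (clampL L y - c i))"]) (auto intro: intf)
    also have "\<dots> = (\<Prod>i\<in>{1..k}. \<integral>\<omega>. exp (s * (clampL L (X i \<omega>) - c i)) \<partial>M)"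
    proof (intro prod.cong refl)
      fix i assume i: "i \<in> {1..k}"
      then have "M' i = distr M borel (X i)" by (auto simp: M'_def max_def)
      then show "(\<integral>y. exp (s * (clampL L y - c i)) \<partial>M' i) = (\<integral>\<omega>. exp (s * (clampL L (X i \<omega>) - c i)) \<partial>M)"
        using i measX by (simp add: integral_distr)
    qed
    finally show ?thesis .
  qed
  finally show ?thesis unfolding eqM .
qed



lemma moment_int:
  assumes P: "prob_space M" and mY[measurable]: "Y \<in> borel_measurable M"
    and pos: "\<And>\<omega>. \<omega> \<in> space M \<Longrightarrow> Y \<omega> > 0"
    and mom: "(\<integral>\<^sup>+\<omega>. ennreal (Y \<omega> powr p) \<partial>M) \<le> ennreal K" and K: "K \<ge> 0"
  shows "integrable M (\<lambda>\<omega>. Y \<omega> powr p)" "(\<integral>\<omega>. Y \<omega> powr p \<partial>M) \<le> K"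
proof -
  have fin: "(\<integral>\<^sup>+\<omega>. ennreal (Y \<omega> powr p) \<partial>M) < \<infinity>"
    by (metis mom ennreal_less_top infinity_ennreal_def order.strict_trans1)
  show int: "integrable M (\<lambda>\<omega>. Y \<omega> powr p)"
    by (rule integrableI_nonneg) (use fin in auto)
  have "(\<integral>\<omega>. Y \<omega> powr p \<partial>M) = enn2real (\<integral>\<^sup>+\<omega>. ennreal (Y \<omega> powr p) \<partial>M)"
    by (rule integral_eq_nn_integral) auto
  also have "\<dots> \<le> enn2real (ennreal K)"
    by (rule enn2real_mono[OF mom]) simp
  also have "\<dots> = K" using K by simp
  finally show "(\<integral>\<omega>. Y \<omega> powr p \<partial>M) \<le> K" .
qed

lemma tail_bound:
  assumes P: "prob_space M" and mY[measurable]: "Y \<in> borel_measurable M"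
    and pos: "\<And>\<omega>. \<omega> \<in> space M \<Longrightarrow> Y \<omega> > 0"
    and mom: "(\<integral>\<^sup>+\<omega>. ennreal (Y \<omega> powr p) \<partial>M) \<le> ennreal K" and K: "K \<ge> 0"
    and p: "p > 0" and L: "L > 0"
  shows "measure M {\<omega>\<in>space M. Y \<omega> > L} \<le> K / L powr p"
proof -
  interpret prob_space M by fact
  note mi = moment_int[OF P mY pos mom K]
  have "measure M {\<omega>\<in>space M. Y \<omega> > L} \<le> measure M {\<omega>\<in>space M. Y \<omega> powr p \<ge> L powr p}"
    using pos L p by (intro finite_measure_mono) (auto intro: powr_mono2 less_imp_le)
  also have "\<dots> \<le> (\<integral>\<omega>. Y \<omega> powr p \<partial>M) / L powr p"
    by (rule integral_Markov_inequality_measure[OF mi(1), where A="space M"]) (use L in auto)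
  also have "\<dots> \<le> K / L powr p"
    using mi(2) L by (intro divide_right_mono) auto
  finally show ?thesis .
qed

lemma shift_bound:
  assumes P: "prob_space M" and mY[measurable]: "Y \<in> borel_measurable M"
    and pos: "\<And>\<omega>. \<omega> \<in> space M \<Longrightarrow> Y \<omega> > 0"
    and mom: "(\<integral>\<^sup>+\<omega>. ennreal (Y \<omega> powr p) \<partial>M) \<le> ennreal K" and K: "K \<ge> 0"
    and p: "p \<ge> 1" and L: "L > 0" and iY: "integrable M Y"
  shows "(\<integral>\<omega>. Y \<omega> \<partial>M) - (\<integral>\<omega>. min (Y \<omega>) L \<partial>M) \<le> K / L powr (p - 1)"
    "(\<integral>\<omega>. min (Y \<omega>) L \<partial>M) \<le> (\<integral>\<omega>. Y \<omega> \<partial>M)"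
proof -
  interpret prob_space M by fact
  note mi = moment_int[OF P mY pos mom K]
  have imin: "integrable M (\<lambda>\<omega>. min (Y \<omega>) L)"
  proof (rule integrable_const_bound[where B="L"])
    show "AE x in M. norm (min (Y x) L) \<le> L"
    proof (rule AE_I2)
      fix x assume "x \<in> space M"
      then have "Y x > 0" by (rule pos)
      then show "norm (min (Y x) L) \<le> L" using L by auto
    qed
  qed measurable
  have pt: "Y \<omega> - min (Y \<omega>) L \<le> Y \<omega> powr p / L powr (p - 1)" if "\<omega> \<in> space M" for \<omega>
  proof (cases "Y \<omega> \<le> L")
    case True then show ?thesis using pos[OF that] by simp
  next
    case False
    have y: "Y \<omega> > 0" using pos[OF that] .
    have "Y \<omega> powr p = Y \<omega> * Y \<omega> powr (p - 1)"
      using y by (simp add: powr_mult_base)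
    also have "\<dots> \<ge> Y \<omega> * L powr (p - 1)"
      using y False L p by (intro mult_left_mono powr_mono2) auto
    finally have "Y \<omega> \<le> Y \<omega> powr p / L powr (p - 1)"
      using L by (simp add: field_simps)
    then show ?thesis using L y by (auto simp: min_def)
  qed
  have "(\<integral>\<omega>. Y \<omega> \<partial>M) - (\<integral>\<omega>. min (Y \<omega>) L \<partial>M) = (\<integral>\<omega>. Y \<omega> - min (Y \<omega>) L \<partial>M)"
    using iY imin by simp
  also have "\<dots> \<le> (\<integral>\<omega>. Y \<omega> powr p / L powr (p - 1) \<partial>M)"
    using iY imin mi(1) pt by (intro integral_mono) auto
  also have "\<dots> = (\<integral>\<omega>. Y \<omega> powr p \<partial>M) / L powr (p - 1)" by simp
  also have "\<dots> \<le> K / L powr (p - 1)"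
    using mi(2) L by (intro divide_right_mono) auto
  finally show "(\<integral>\<omega>. Y \<omega> \<partial>M) - (\<integral>\<omega>. min (Y \<omega>) L \<partial>M) \<le> K / L powr (p - 1)" .
  show "(\<integral>\<omega>. min (Y \<omega>) L \<partial>M) \<le> (\<integral>\<omega>. Y \<omega> \<partial>M)"
    using iY imin by (intro integral_mono) auto
qed

lemma mgf_single:
  assumes P: "prob_space M" and mY[measurable]: "Y \<in> borel_measurable M"
    and pos: "\<And>\<omega>. \<omega> \<in> space M \<Longrightarrow> Y \<omega> > 0"
    and iY: "integrable M Y" and L: "L > 0" and sL: "\<bar>s\<bar> * L \<le> 1"
    and c: "c = (\<integral>\<omega>. min (Y \<omega>) L \<partial>M)"
  shows "(\<integral>\<omega>. exp (s * (clampL L (Y \<omega>) - c)) \<partial>M) \<le> exp (2 * s\<^sup>2 * L * (\<integral>\<omega>. Y \<omega> \<partial>M))"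
proof -
  interpret prob_space M by fact
  have imin: "integrable M (\<lambda>\<omega>. min (Y \<omega>) L)"
  proof (rule integrable_const_bound[where B="L"])
    show "AE x in M. norm (min (Y x) L) \<le> L"
    proof (rule AE_I2)
      fix x assume "x \<in> space M"
      then have "Y x > 0" by (rule pos)
      then show "norm (min (Y x) L) \<le> L" using L by auto
    qed
  qed measurable
  have c0: "0 \<le> c" unfolding c using L by (intro integral_nonneg_AE AE_I2) (auto intro: less_imp_le pos)
  have cL: "c \<le> L"
  proof -
    have "c \<le> (\<integral>\<omega>. L \<partial>M)" unfolding c using imin by (intro integral_mono) auto
    then show ?thesis by (simp add: prob_space)
  qed
  have cm: "c \<le> (\<integral>\<omega>. Y \<omega> \<partial>M)" unfolding c using iY imin by (intro integral_mono) auto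
  have cl: "clampL L (Y \<omega>) = min (Y \<omega>) L" if "\<omega> \<in> space M" for \<omega>
    using pos[OF that] L by (simp add: clampL_def)
  have pt: "exp (s * (clampL L (Y \<omega>) - c)) \<le> (1 - s * c + s\<^sup>2 * L * c) + (s + s\<^sup>2 * L) * min (Y \<omega>) L"
    if "\<omega> \<in> space M" for \<omega>
  proof -
    define a where "a = min (Y \<omega>) L"
    have a: "0 \<le> a" "a \<le> L" using pos[OF that] L by (auto simp: a_def)
    have ac: "\<bar>a - c\<bar> \<le> L" using a c0 cL by auto
    have x1: "\<bar>s * (a - c)\<bar> \<le> 1"
    proof -
      have "\<bar>s * (a - c)\<bar> = \<bar>s\<bar> * \<bar>a - c\<bar>" by (simp add: abs_mult)
      also have "\<dots> \<le> \<bar>s\<bar> * L" by (intro mult_left_mono ac) auto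
      finally show ?thesis using sL by linarith
    qed
    have sq: "(s * (a - c))\<^sup>2 \<le> s\<^sup>2 * L * (a + c)"
    proof -
      have "(a - c)\<^sup>2 = \<bar>a - c\<bar> * \<bar>a - c\<bar>" by (simp add: power2_eq_square)
      also have "\<dots> \<le> L * (a + c)"
        using ac a c0 by (intro mult_mono) auto
      finally show ?thesis by (simp add: power_mult_distrib mult.assoc mult_left_mono)
    qed
    have "exp (s * (a - c)) \<le> 1 + s * (a - c) + (s * (a - c))\<^sup>2" by (rule exp_quad[OF x1])
    also have "\<dots> \<le> 1 + s * (a - c) + s\<^sup>2 * L * (a + c)" using sq by simp
    also have "\<dots> = (1 - s * c + s\<^sup>2 * L * c) + (s + s\<^sup>2 * L) * a" by (simp add: algebra_simps)
    finally show ?thesis using cl[OF that] by (simp add: a_def)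
  qed
  have iexp: "integrable M (\<lambda>\<omega>. exp (s * (clampL L (Y \<omega>) - c)))"
  proof (rule integrable_const_bound[where B="exp (\<bar>s\<bar> * (\<bar>L\<bar> + \<bar>c\<bar>))"])
    show "AE x in M. norm (exp (s * (clampL L (Y x) - c))) \<le> exp (\<bar>s\<bar> * (\<bar>L\<bar> + \<bar>c\<bar>))"
    proof (intro AE_I2)
      fix x
      have "\<bar>clampL L (Y x)\<bar> \<le> \<bar>L\<bar>" by (auto simp: clampL_def)
      then have "\<bar>clampL L (Y x) - c\<bar> \<le> \<bar>L\<bar> + \<bar>c\<bar>" by linarith
      then have "s * (clampL L (Y x) - c) \<le> \<bar>s\<bar> * (\<bar>L\<bar> + \<bar>c\<bar>)"
        by (metis abs_ge_self abs_mult abs_ge_zero mult_left_mono order_trans)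
      then show "norm (exp (s * (clampL L (Y x) - c))) \<le> exp (\<bar>s\<bar> * (\<bar>L\<bar> + \<bar>c\<bar>))" by simp
    qed
  qed measurable
  have "(\<integral>\<omega>. exp (s * (clampL L (Y \<omega>) - c)) \<partial>M) \<le> (\<integral>\<omega>. (1 - s * c + s\<^sup>2 * L * c) + (s + s\<^sup>2 * L) * min (Y \<omega>) L \<partial>M)"
    using iexp imin pt by (intro integral_mono) auto
  also have "\<dots> = (1 - s * c + s\<^sup>2 * L * c) + (s + s\<^sup>2 * L) * c"
    using imin by (simp add: c prob_space)
  also have "\<dots> = 1 + 2 * s\<^sup>2 * L * c" by (simp add: algebra_simps)
  also have "\<dots> \<le> 1 + 2 * s\<^sup>2 * L * (\<integral>\<omega>. Y \<omega> \<partial>M)"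
    using cm L by (intro add_left_mono mult_left_mono) auto
  also have "\<dots> \<le> exp (2 * s\<^sup>2 * L * (\<integral>\<omega>. Y \<omega> \<partial>M))"
    by (rule exp_ge_add_one_self)
  finally show ?thesis .
qed



lemma sum_sq_nat: "(\<Sum>k=1..N. (real k)\<^sup>2) = real N * (N+1) * (2*N+1) / 6"
  by (induction N) (auto simp: algebra_simps power2_eq_square)

lemma q_lim: "(\<lambda>N::nat. (1 / real N) * (\<Sum>k=1..N. (real k / real N)\<^sup>2)) \<longlonglongrightarrow> 1/3"
proof -
  have L: "(\<lambda>N::nat. real (N+1) * (2*N+1) / (6 * real N ^ 2)) \<longlonglongrightarrow> 1/3"
    by real_asymp
  moreover have "(1 / real N) * (\<Sum>k=1..N. (real k / real N)\<^sup>2) = real (N+1) * (2*N+1) / (6 * real N ^ 2)"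
    if "N \<ge> 1" for N
  proof -
    have "(\<Sum>k=1..N. (real k / real N)\<^sup>2) = (\<Sum>k=1..N. (real k)\<^sup>2) / (real N)^2"
      by (simp add: power_divide sum_divide_distrib)
    also have "\<dots> = (real N * (N+1) * (2*N+1) / 6) / (real N)^2" by (simp only: sum_sq_nat)
    finally show ?thesis using that by (simp add: field_simps power2_eq_square)
  qed
  moreover have E: "eventually (\<lambda>N. real (N+1) * (2*N+1) / (6 * real N ^ 2) = (1 / real N) * (\<Sum>k=1..N. (real k / real N)\<^sup>2)) sequentially"
    using calculation(2) by (auto simp: eventually_sequentially intro!: exI[of _ 1])
  ultimately show ?thesis
    using Lim_transform_eventually[OF L E] by simp
qed

lemma det_conv:
  fixes x :: "nat \<Rightarrow> nat \<Rightarrow> real"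
  assumes H: "\<And>\<epsilon>. \<epsilon> > 0 \<Longrightarrow> eventually (\<lambda>N. \<forall>k\<in>{1..N}. \<bar>x N k - real k / real N\<bar> \<le> \<epsilon>) sequentially"
  shows "(\<lambda>N. (1 / real N) * (\<Sum>k=1..N. (x N k)\<^sup>2)) \<longlonglongrightarrow> 1/3"
proof -
  let ?q = "\<lambda>N::nat. (1 / real N) * (\<Sum>k=1..N. (real k / real N)\<^sup>2)"
  let ?f = "\<lambda>N. (1 / real N) * (\<Sum>k=1..N. (x N k)\<^sup>2)"
  have "(\<lambda>N. ?f N - ?q N) \<longlonglongrightarrow> 0"
  proof (rule LIMSEQ_I)
    fix e :: real assume e: "e > 0"
    define \<epsilon> where "\<epsilon> = min 1 (e/4)"
    have \<epsilon>: "\<epsilon> > 0" "\<epsilon> \<le> 1" "3 * \<epsilon> < e" using e by (auto simp: \<epsilon>_def)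
    from H[OF \<epsilon>(1)] obtain N0 where N0: "\<And>N. N \<ge> N0 \<Longrightarrow> \<forall>k\<in>{1..N}. \<bar>x N k - real k / real N\<bar> \<le> \<epsilon>"
      by (auto simp: eventually_sequentially)
    show "\<exists>no. \<forall>n\<ge>no. norm (?f n - ?q n - 0) < e"
    proof (intro exI[of _ "max N0 1"] allI impI)
      fix N assume N: "N \<ge> max N0 1"
      have b: "\<bar>(x N k)\<^sup>2 - (real k / real N)\<^sup>2\<bar> \<le> 3 * \<epsilon>" if k: "k \<in> {1..N}" for k
      proof -
        have d: "\<bar>x N k - real k / real N\<bar> \<le> \<epsilon>" using N0[of N] N k by auto
        have y: "0 \<le> real k / real N" "real k / real N \<le> 1" using k by auto
        have "\<bar>x N k + real k / real N\<bar> \<le> 2 + \<epsilon>" using d y by linarith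
        have "\<bar>(x N k)\<^sup>2 - (real k / real N)\<^sup>2\<bar> = \<bar>x N k - real k / real N\<bar> * \<bar>x N k + real k / real N\<bar>"
          by (simp add: power2_eq_square abs_mult[symmetric] algebra_simps)
        also have "\<dots> \<le> \<epsilon> * (2 + \<epsilon>)"
          by (intro mult_mono d \<open>\<bar>x N k + real k / real N\<bar> \<le> 2 + \<epsilon>\<close>) (use \<epsilon> in auto)
        also have "\<dots> \<le> 3 * \<epsilon>" using \<epsilon> by (auto simp: algebra_simps)
        finally show ?thesis .
      qed
      have "?f N - ?q N = (1 / real N) * (\<Sum>k=1..N. (x N k)\<^sup>2 - (real k / real N)\<^sup>2)"
        by (simp add: sum_subtractf algebra_simps)
      hence "\<bar>?f N - ?q N\<bar> \<le> (1 / real N) * (\<Sum>k=1..N. \<bar>(x N k)\<^sup>2 - (real k / real N)\<^sup>2\<bar>)"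
        using N by (simp add: abs_mult divide_right_mono sum_abs)
      also have "\<dots> \<le> (1 / real N) * (\<Sum>k=1..N. 3 * \<epsilon>)"
        by (intro mult_left_mono sum_mono b) auto
      also have "\<dots> = 3 * \<epsilon>" using N by simp
      finally show "norm (?f N - ?q N - 0) < e" using \<epsilon> by simp
    qed
  qed
  from tendsto_add[OF this q_lim] show ?thesis by simp
qed



context
  fixes M :: "'a measure" and t :: "nat \<Rightarrow> nat \<Rightarrow> 'a \<Rightarrow> real"
    and r C :: real
  assumes P: "prob_space M"
    and meas: "\<And>N j. N \<ge> 1 \<Longrightarrow> j \<ge> 1 \<Longrightarrow> t N j \<in> borel_measurable M"
    and pos: "\<And>N j \<omega>. N \<ge> 1 \<Longrightarrow> j \<ge> 1 \<Longrightarrow> \<omega> \<in> space M \<Longrightarrow> t N j \<omega> > 0"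
    and mean: "\<And>N j. N \<ge> 1 \<Longrightarrow> j \<ge> 1 \<Longrightarrow>
                 integrable M (t N j) \<and> (\<integral>\<omega>. t N j \<omega> \<partial>M) = 1 / real N"
    and r_pos: "r > 0" and C_pos: "C > 0"
    and moment: "\<And>N j. N \<ge> 1 \<Longrightarrow> j \<ge> 1 \<Longrightarrow>
                 (\<integral>\<^sup>+\<omega>. ennreal (t N j \<omega> powr (2 + r)) \<partial>M)
                   \<le> ennreal (C / real N powr (2 + r))"
    and nsd: "\<And>N m. N \<ge> 1 \<Longrightarrow> NSD M (t N) m"
begin

lemma ev_bound:
  assumes N: "N \<ge> 1" and k: "k \<le> N" and L: "L > 0" and \<delta>: "0 < \<delta>" "\<delta> \<le> 1"
    and \<sigma>: "\<sigma>\<^sup>2 = 1"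
    and c: "\<And>j. c j = (\<integral>\<omega>. min (t N j \<omega>) L \<partial>M)"
  shows "measure M {\<omega>\<in>space M. \<delta> \<le> \<sigma> * (\<Sum>j\<in>{1..k}. clampL L (t N j \<omega>) - c j)}
           \<le> exp (- \<delta>\<^sup>2 / (8 * L))"
proof -
  interpret prob_space M by (rule P)
  define lam where "lam = \<delta> / (4 * L)"
  define s where "s = \<sigma> * lam"
  have lamp: "lam > 0" using \<delta> L by (simp add: lam_def)
  have s2: "s\<^sup>2 = lam\<^sup>2" using \<sigma> by (simp add: s_def power_mult_distrib)
  have abss: "\<bar>s\<bar> = lam"
  proof -
    have "\<bar>s\<bar>\<^sup>2 = lam\<^sup>2" using s2 by simp
    then show ?thesis using lamp by (metis abs_ge_zero less_imp_le power2_eq_iff_nonneg)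
  qed
  have sL: "\<bar>s\<bar> * L \<le> 1" using abss \<delta> L by (simp add: lam_def)
  let ?S = "\<lambda>\<omega>. (\<Sum>j\<in>{1..k}. clampL L (t N j \<omega>) - c j)"
  have measS: "?S \<in> borel_measurable M"
    by (intro borel_measurable_sum borel_measurable_diff clampL_meas meas borel_measurable_const) (use N in auto)
  have iexp: "integrable M (\<lambda>\<omega>. exp (s * ?S \<omega>))"
  proof (rule integrable_const_bound[where B="exp (\<bar>s\<bar> * (\<Sum>i\<in>{1..k}. \<bar>L\<bar> + \<bar>c i\<bar>))"])
    show "AE x in M. norm (exp (s * ?S x)) \<le> exp (\<bar>s\<bar> * (\<Sum>i\<in>{1..k}. \<bar>L\<bar> + \<bar>c i\<bar>))"
      by (intro AE_I2 exp_sum_bound)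
    show "(\<lambda>\<omega>. exp (s * ?S \<omega>)) \<in> borel_measurable M" using measS by measurable
  qed
  have "(\<integral>\<omega>. exp (s * ?S \<omega>) \<partial>M) \<le> (\<Prod>i\<in>{1..k}. \<integral>\<omega>. exp (s * (clampL L (t N i \<omega>) - c i)) \<partial>M)"
    by (rule nsd_mgf[OF P _ nsd[OF N]]) (use N meas in auto)
  also have "\<dots> \<le> (\<Prod>i\<in>{1..k}. exp (2 * s\<^sup>2 * L * (1 / real N)))"
  proof (rule prod_mono)
    fix i assume i: "i \<in> {1..k}"
    then have i1: "i \<ge> 1" by auto
    have "(\<integral>\<omega>. exp (s * (clampL L (t N i \<omega>) - c i)) \<partial>M) \<le> exp (2 * s\<^sup>2 * L * (\<integral>\<omega>. t N i \<omega> \<partial>M))"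
      by (rule mgf_single[OF P meas[OF N i1] pos[OF N i1] conjunct1[OF mean[OF N i1]] L sL]) (simp_all add: c)
    then show "0 \<le> (\<integral>\<omega>. exp (s * (clampL L (t N i \<omega>) - c i)) \<partial>M) \<and>
      (\<integral>\<omega>. exp (s * (clampL L (t N i \<omega>) - c i)) \<partial>M) \<le> exp (2 * s\<^sup>2 * L * (1 / real N))"
      using mean[OF N i1] by (auto intro!: integral_nonneg_AE)
  qed
  also have "\<dots> = exp (2 * s\<^sup>2 * L * (1 / real N)) ^ k" by simp
  also have "\<dots> = exp (real k * (2 * s\<^sup>2 * L * (1 / real N)))" by (rule exp_of_nat_mult[symmetric])
  also have "\<dots> \<le> exp (2 * s\<^sup>2 * L)"
  proof -
    have "real k * (1 / real N) \<le> 1" using k N by (simp add: field_simps)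
    then have "real k * (2 * s\<^sup>2 * L * (1 / real N)) \<le> 1 * (2 * s\<^sup>2 * L)"
    proof -
      have "real k * (2 * s\<^sup>2 * L * (1 / real N)) = (real k * (1 / real N)) * (2 * s\<^sup>2 * L)"
        by (simp add: algebra_simps)
      also have "\<dots> \<le> 1 * (2 * s\<^sup>2 * L)"
        by (intro mult_right_mono \<open>real k * (1 / real N) \<le> 1\<close>) (use L in auto)
      finally show ?thesis .
    qed
    then show ?thesis by simp
  qed
  finally have mgf: "(\<integral>\<omega>. exp (s * ?S \<omega>) \<partial>M) \<le> exp (2 * s\<^sup>2 * L)" .
  have seteq: "{\<omega>\<in>space M. \<delta> \<le> \<sigma> * ?S \<omega>} = {\<omega>\<in>space M. exp (s * ?S \<omega>) \<ge> exp (lam * \<delta>)}"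
  proof -
    have "\<delta> \<le> \<sigma> * x \<longleftrightarrow> lam * \<delta> \<le> s * x" for x
      using lamp by (simp add: s_def mult.assoc mult.left_commute)
    then show ?thesis by simp
  qed
  have "measure M {\<omega>\<in>space M. \<delta> \<le> \<sigma> * ?S \<omega>} \<le> (\<integral>\<omega>. exp (s * ?S \<omega>) \<partial>M) / exp (lam * \<delta>)"
    unfolding seteq by (rule integral_Markov_inequality_measure[OF iexp, where A="space M"]) auto
  also have "\<dots> \<le> exp (2 * s\<^sup>2 * L) / exp (lam * \<delta>)"
    by (intro divide_right_mono mgf) auto
  also have "\<dots> = exp (2 * lam\<^sup>2 * L - lam * \<delta>)" by (simp add: s2 exp_diff)
  also have "2 * lam\<^sup>2 * L - lam * \<delta> = - \<delta>\<^sup>2 / (8 * L)"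
    using L by (simp add: lam_def field_simps power2_eq_square)
  finally show ?thesis .
qed


lemma powr_neg_lim: fixes Cc e :: real assumes "e < 0"
  shows "(\<lambda>N::nat. Cc * real N powr e) \<longlonglongrightarrow> 0"
  using assms by real_asymp

lemma exp_bigo: fixes d b :: real assumes "b > 0" "d > 0"
  shows "(\<lambda>N::nat. 2 * real N * exp (- d * real N powr b)) \<in> O(\<lambda>N. real N powr (-2))"
  using assms by real_asymp

lemma main_delta:
  assumes \<delta>: "0 < \<delta>" "\<delta> \<le> 1"
  shows "AE \<omega> in M. eventually (\<lambda>N. \<forall>k\<in>{1..N}. \<bar>(\<Sum>j=1..k. t N j \<omega>) - real k / real N\<bar> \<le> 2 * \<delta>) sequentially"
proof -
  interpret prob_space M by (rule P)
  define \<beta> where "\<beta> = r / (2 * (2 + r))"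
  define L where "L = (\<lambda>N::nat. real N powr (- \<beta>))"
  define c where "c = (\<lambda>N j. \<integral>\<omega>. min (t N j \<omega>) (L N) \<partial>M)"
  define S where "S = (\<lambda>N k \<omega>. \<Sum>j\<in>{1..k}. clampL (L N) (t N j \<omega>) - c N j)"
  define A where "A = (\<lambda>N. (\<Union>j\<in>{1..N}. {\<omega>\<in>space M. t N j \<omega> > L N}) \<union>
      (\<Union>k\<in>{1..N}. {\<omega>\<in>space M. \<delta> \<le> 1 * S N k \<omega>} \<union> {\<omega>\<in>space M. \<delta> \<le> (-1) * S N k \<omega>}))"
  define d where "d = \<delta>\<^sup>2 / 8"
  define g where "g = (\<lambda>N::nat. C * real N powr (-(1 + r/2)) + 2 * real N * exp (- d * real N powr \<beta>))"
  define h where "h = (\<lambda>N::nat. C * real N powr (-(1 + r/2) - \<beta>))"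
  have \<beta>: "\<beta> > 0" "\<beta> * (2 + r) = r / 2" using r_pos by (auto simp: \<beta>_def field_simps)
  have d: "d > 0" using \<delta> by (simp add: d_def)
  have LN: "L N > 0" if "N \<ge> 1" for N using that by (simp add: L_def)
  have mt: "t N j \<in> borel_measurable M" if "j \<in> {1..N}" for N j using that meas by auto
  have mS: "S N k \<in> borel_measurable M" if "k \<in> {1..N}" for N k
    unfolding S_def
    by (intro borel_measurable_sum borel_measurable_diff clampL_meas borel_measurable_const mt) (use that in auto)
  have s1: "{\<omega>\<in>space M. t N j \<omega> > L N} \<in> sets M" if "j \<in> {1..N}" for N j
  proof -
    note mt[OF that, measurable]
    show ?thesis by measurable
  qed
  have s2: "{\<omega>\<in>space M. \<delta> \<le> \<sigma> * S N k \<omega>} \<in> sets M" if "k \<in> {1..N}" for N k \<sigma>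
  proof -
    note mS[OF that, measurable]
    show ?thesis by measurable
  qed
  have s2a: "{\<omega>\<in>space M. \<delta> \<le> S N k \<omega>} \<in> sets M" if "k \<in> {1..N}" for N k
    using s2[OF that, of 1] by simp
  have s2b: "{\<omega>\<in>space M. \<delta> \<le> - S N k \<omega>} \<in> sets M" if "k \<in> {1..N}" for N k
    using s2[OF that, of "-1"] by simp
  have Asets: "A N \<in> sets M" for N
    unfolding A_def
    by (intro sets.Un sets.finite_UN finite_atLeastAtMost ballI s1 s2)
  have Abound: "measure M (A N) \<le> g N" if N: "N \<ge> 1" for N
  proof -
    define x where "x = real N"
    have x: "x > 0" "x \<ge> 1" using N by (auto simp: x_def)
    have m1: "measure M (\<Union>j\<in>{1..N}. {\<omega>\<in>space M. t N j \<omega> > L N}) \<le> real N * (C / x powr (2 + r) / L N powr (2 + r))"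
    proof -
      have "measure M (\<Union>j\<in>{1..N}. {\<omega>\<in>space M. t N j \<omega> > L N}) \<le> (\<Sum>j\<in>{1..N}. measure M {\<omega>\<in>space M. t N j \<omega> > L N})"
        by (rule finite_measure_subadditive_finite) (auto intro: s1)
      also have "\<dots> \<le> (\<Sum>j\<in>{1..N}. C / x powr (2 + r) / L N powr (2 + r))"
      proof (rule sum_mono)
        fix j assume j: "j \<in> {1..N}"
        then have j1: "j \<ge> 1" by auto
        show "measure M {\<omega>\<in>space M. t N j \<omega> > L N} \<le> C / x powr (2 + r) / L N powr (2 + r)"
          unfolding x_def
          by (rule tail_bound[OF P meas[OF N j1] pos[OF N j1] moment[OF N j1]]) (use C_pos r_pos LN[OF N] in auto)
      qed
      also have "\<dots> = real N * (C / x powr (2 + r) / L N powr (2 + r))" by simp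
      finally show ?thesis .
    qed
    have m2: "measure M (\<Union>k\<in>{1..N}. {\<omega>\<in>space M. \<delta> \<le> 1 * S N k \<omega>} \<union> {\<omega>\<in>space M. \<delta> \<le> (-1) * S N k \<omega>})
       \<le> real N * (2 * exp (- \<delta>\<^sup>2 / (8 * L N)))"
    proof -
      have "measure M (\<Union>k\<in>{1..N}. {\<omega>\<in>space M. \<delta> \<le> 1 * S N k \<omega>} \<union> {\<omega>\<in>space M. \<delta> \<le> (-1) * S N k \<omega>})
          \<le> (\<Sum>k\<in>{1..N}. measure M ({\<omega>\<in>space M. \<delta> \<le> 1 * S N k \<omega>} \<union> {\<omega>\<in>space M. \<delta> \<le> (-1) * S N k \<omega>}))"
        by (rule finite_measure_subadditive_finite) (auto intro!: sets.Un s2 s2a s2b)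
      also have "\<dots> \<le> (\<Sum>k\<in>{1..N}. 2 * exp (- \<delta>\<^sup>2 / (8 * L N)))"
      proof (rule sum_mono)
        fix k assume k: "k \<in> {1..N}"
        have b: "measure M {\<omega>\<in>space M. \<delta> \<le> \<sigma> * S N k \<omega>} \<le> exp (- \<delta>\<^sup>2 / (8 * L N))" if "\<sigma>\<^sup>2 = 1" for \<sigma> :: real
          unfolding S_def
          by (rule ev_bound[OF N _ LN[OF N] \<delta> that]) (use k in \<open>auto simp: c_def\<close>)
        have "measure M ({\<omega>\<in>space M. \<delta> \<le> 1 * S N k \<omega>} \<union> {\<omega>\<in>space M. \<delta> \<le> (-1) * S N k \<omega>})
           \<le> measure M {\<omega>\<in>space M. \<delta> \<le> 1 * S N k \<omega>} + measure M {\<omega>\<in>space M. \<delta> \<le> (-1) * S N k \<omega>}"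
          by (rule measure_Un_le) (auto intro!: s2 s2a s2b k)
        also have "\<dots> \<le> exp (- \<delta>\<^sup>2 / (8 * L N)) + exp (- \<delta>\<^sup>2 / (8 * L N))"
          by (intro add_mono b) auto
        finally show "measure M ({\<omega>\<in>space M. \<delta> \<le> 1 * S N k \<omega>} \<union> {\<omega>\<in>space M. \<delta> \<le> (-1) * S N k \<omega>})
           \<le> 2 * exp (- \<delta>\<^sup>2 / (8 * L N))" by simp
      qed
      also have "\<dots> = real N * (2 * exp (- \<delta>\<^sup>2 / (8 * L N)))" by simp
      finally show ?thesis .
    qed
    have "measure M (A N) \<le> real N * (C / x powr (2 + r) / L N powr (2 + r)) + real N * (2 * exp (- \<delta>\<^sup>2 / (8 * L N)))"
      unfolding A_def
      by (rule order_trans[OF measure_Un_le add_mono[OF m1 m2]]) (auto intro!: sets.Un sets.finite_UN s1 s2 s2a s2b)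
    also have "real N * (C / x powr (2 + r) / L N powr (2 + r)) = C * real N powr (-(1 + r/2))"
    proof -
      have e1: "L N powr (2 + r) = x powr (-(r/2))"
      proof -
        have "L N powr (2 + r) = x powr (-\<beta> * (2 + r))" by (simp add: L_def x_def powr_powr)
        also have "-\<beta> * (2 + r) = -(r/2)" by (metis \<beta>(2) minus_mult_left)
        finally show ?thesis .
      qed
      have e2: "x powr (-(1 + r/2)) = x powr 1 / (x powr (2 + r) * x powr (-(r/2)))"
      proof -
        have "-(1 + r/2) = 1 - ((2 + r) + (-(r/2)))" by simp
        then show ?thesis by (simp only: powr_diff powr_add)
      qed
      have "real N * (C / x powr (2 + r) / L N powr (2 + r)) = C * (x powr 1 / (x powr (2 + r) * x powr (-(r/2))))"
        unfolding e1 x_def[symmetric] using x by (simp add: field_simps)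
      also have "\<dots> = C * x powr (-(1 + r/2))" by (simp only: e2)
      finally show ?thesis by (simp add: x_def)
    qed
    also have "real N * (2 * exp (- \<delta>\<^sup>2 / (8 * L N))) = 2 * real N * exp (- d * real N powr \<beta>)"
    proof -
      have "L N = 1 / real N powr \<beta>" by (simp add: L_def powr_minus_divide)
      then have "- \<delta>\<^sup>2 / (8 * L N) = - d * real N powr \<beta>" by (simp add: d_def)
      then show ?thesis by simp
    qed
    finally show ?thesis by (simp add: g_def)
  qed
  have gsum: "summable g"
  proof -
    have s1: "summable (\<lambda>N::nat. C * real N powr (-(1 + r/2)))"
      by (intro summable_mult) (use r_pos in \<open>simp add: summable_real_powr_iff\<close>)
    have s2: "summable (\<lambda>N::nat. 2 * real N * exp (- d * real N powr \<beta>))"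
      by (rule summable_comparison_test_bigo[OF _ exp_bigo[OF \<beta>(1) d]]) (simp add: summable_real_powr_iff)
    show ?thesis unfolding g_def by (rule summable_add[OF s1 s2])
  qed
  have Asum: "summable (\<lambda>N. measure M (A N))"
    by (rule summable_comparison_test'[OF gsum, where N=1]) (use Abound in auto)
  have BC: "AE \<omega> in M. eventually (\<lambda>N. \<omega> \<in> space M - A N) sequentially"
    by (rule borel_cantelli_AE1[OF Asets _ Asum]) (simp add: emeasure_eq_measure)
  have hlim: "h \<longlonglongrightarrow> 0" unfolding h_def by (rule powr_neg_lim) (use r_pos \<beta> in auto)
  have evh: "eventually (\<lambda>N. h N \<le> \<delta>) sequentially"
    using order_tendstoD(2)[OF hlim, of \<delta>] \<delta> by (auto elim: eventually_mono)
  have pw: "\<bar>(\<Sum>j=1..k. t N j \<omega>) - real k / real N\<bar> \<le> 2 * \<delta>"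
    if N: "N \<ge> 1" and \<omega>: "\<omega> \<in> space M" "\<omega> \<notin> A N" and hN: "h N \<le> \<delta>" and k: "k \<in> {1..N}" for N \<omega> k
  proof -
    define x where "x = real N"
    have x: "x > 0" using N by (simp add: x_def)
    define sh where "sh = C / x powr (2 + r) / L N powr (2 + r - 1)"
    have tle: "t N j \<omega> \<le> L N" if "j \<in> {1..N}" for j using \<omega> that by (auto simp: A_def not_less)
    have Sb: "\<bar>S N k \<omega>\<bar> < \<delta>" using \<omega> k by (auto simp: A_def not_le abs_less_iff)
    have cl: "clampL (L N) (t N j \<omega>) = t N j \<omega>" if "j \<in> {1..k}" for j
    proof -
      have "j \<in> {1..N}" "j \<ge> 1" using that k by auto
      then show ?thesis using tle[of j] pos[OF N _ \<omega>(1), of j] by (simp add: clampL_def)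
    qed
    have sumt: "(\<Sum>j=1..k. t N j \<omega>) = S N k \<omega> + (\<Sum>j=1..k. c N j)"
      unfolding S_def using cl by (simp add: sum_subtractf)
    have kN: "real k / real N = (\<Sum>j=1..k. 1 / real N)" by simp
    have shb: "0 \<le> 1 / real N - c N j \<and> 1 / real N - c N j \<le> sh" if "j \<in> {1..k}" for j
    proof -
      have j1: "j \<ge> 1" using that by auto
      note sb = shift_bound[OF P meas[OF N j1] pos[OF N j1] moment[OF N j1] _ _ LN[OF N] conjunct1[OF mean[OF N j1]]]
      have "(\<integral>\<omega>. t N j \<omega> \<partial>M) = 1 / real N" using mean[OF N j1] by simp
      then show ?thesis using sb C_pos r_pos by (auto simp: c_def sh_def x_def)
    qed
    have sumsh: "0 \<le> (\<Sum>j=1..k. 1 / real N - c N j) \<and> (\<Sum>j=1..k. 1 / real N - c N j) \<le> real k * sh"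
    proof
      show "0 \<le> (\<Sum>j=1..k. 1 / real N - c N j)" using shb by (intro sum_nonneg) auto
      have "(\<Sum>j=1..k. 1 / real N - c N j) \<le> (\<Sum>j=1..k. sh)" using shb by (intro sum_mono) auto
      then show "(\<Sum>j=1..k. 1 / real N - c N j) \<le> real k * sh" by simp
    qed
    have sh0: "sh \<ge> 0" using C_pos LN[OF N] x by (simp add: sh_def)
    have "real k * sh \<le> real N * sh" using k sh0 by (intro mult_right_mono) auto
    also have "real N * sh = h N"
    proof -
      have e1: "L N powr (2 + r - 1) = x powr (\<beta> - r/2)"
      proof -
        have "- \<beta> * (2 + r - 1) = \<beta> - r/2" using \<beta>(2) by (simp add: algebra_simps)
        then show ?thesis by (simp add: L_def x_def powr_powr)
      qed
      have e2: "x powr (-(1 + r/2) - \<beta>) = x powr 1 / (x powr (2 + r) * x powr (\<beta> - r/2))"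
      proof -
        have "-(1 + r/2) - \<beta> = 1 - ((2 + r) + (\<beta> - r/2))" by simp
        then show ?thesis by (simp only: powr_diff powr_add)
      qed
      have "real N * sh = C * (x powr 1 / (x powr (2 + r) * x powr (\<beta> - r/2)))"
        unfolding sh_def e1 x_def[symmetric] using x by (simp add: field_simps)
      also have "\<dots> = C * x powr (-(1 + r/2) - \<beta>)" by (simp only: e2)
      finally show ?thesis by (simp add: x_def h_def)
    qed
    finally have ksh: "real k * sh \<le> \<delta>" using hN by simp
    have "(\<Sum>j=1..k. t N j \<omega>) - real k / real N = S N k \<omega> - (\<Sum>j=1..k. 1 / real N - c N j)"
      unfolding sumt kN by (simp add: sum_subtractf)
    then show ?thesis using Sb sumsh ksh by linarith
  qed
  show ?thesis
  proof -
    have "AE \<omega> in M. \<omega> \<in> space M \<and> eventually (\<lambda>N. \<omega> \<in> space M - A N) sequentially"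
      using BC AE_space by eventually_elim auto
    then show ?thesis
    proof (rule AE_mp[OF _ AE_I2], intro impI)
      fix \<omega> assume "\<omega> \<in> space M \<and> eventually (\<lambda>N. \<omega> \<in> space M - A N) sequentially"
      then have \<omega>: "\<omega> \<in> space M" and ev: "eventually (\<lambda>N. \<omega> \<in> space M - A N) sequentially" by auto
      have "eventually (\<lambda>N. N \<ge> 1 \<and> h N \<le> \<delta> \<and> \<omega> \<in> space M - A N) sequentially"
        using ev evh eventually_ge_at_top[of "1::nat"] by eventually_elim auto
      then show "eventually (\<lambda>N. \<forall>k\<in>{1..N}. \<bar>(\<Sum>j=1..k. t N j \<omega>) - real k / real N\<bar> \<le> 2 * \<delta>) sequentially"
        by eventually_elim (use pw \<omega> in auto)
    qed
  qed
qed

end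

theorem proposition4p5:
  fixes M :: "'a measure" and t :: "nat \<Rightarrow> nat \<Rightarrow> 'a \<Rightarrow> real"
    and r C :: real
  assumes "prob_space M"
    and meas: "\<And>N j. N \<ge> 1 \<Longrightarrow> j \<ge> 1 \<Longrightarrow> t N j \<in> borel_measurable M"
    and pos: "\<And>N j \<omega>. N \<ge> 1 \<Longrightarrow> j \<ge> 1 \<Longrightarrow> \<omega> \<in> space M \<Longrightarrow> t N j \<omega> > 0"
    and mean: "\<And>N j. N \<ge> 1 \<Longrightarrow> j \<ge> 1 \<Longrightarrow>
                 integrable M (t N j) \<and> (\<integral>\<omega>. t N j \<omega> \<partial>M) = 1 / real N"
    and r_pos: "r > 0" and C_pos: "C > 0"
    and moment: "\<And>N j. N \<ge> 1 \<Longrightarrow> j \<ge> 1 \<Longrightarrow>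
                 (\<integral>\<^sup>+\<omega>. ennreal (t N j \<omega> powr (2 + r)) \<partial>M)
                   \<le> ennreal (C / real N powr (2 + r))"
    and nsd: "\<And>N m. N \<ge> 1 \<Longrightarrow> NSD M (t N) m"
  shows "AE \<omega> in M.
           (\<lambda>N. (1 / real N) * (\<Sum>k=1..N. (\<Sum>j=1..k. t N j \<omega>)\<^sup>2))
             \<longlonglongrightarrow> 1 / 3"
  proof -
  have H: "AE \<omega> in M. eventually (\<lambda>N. \<forall>k\<in>{1..N}. \<bar>(\<Sum>j=1..k. t N j \<omega>) - real k / real N\<bar> \<le> 2 * (1 / real (Suc n))) sequentially" for n
    by (rule main_delta[OF assms]) auto
  then have "AE \<omega> in M. \<forall>n. eventually (\<lambda>N. \<forall>k\<in>{1..N}. \<bar>(\<Sum>j=1..k. t N j \<omega>) - real k / real N\<bar> \<le> 2 * (1 / real (Suc n))) sequentially"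
    by (simp add: AE_all_countable)
  then show ?thesis
  proof (rule AE_mp[OF _ AE_I2], intro impI)
    fix \<omega>
    assume h: "\<forall>n. eventually (\<lambda>N. \<forall>k\<in>{1..N}. \<bar>(\<Sum>j=1..k. t N j \<omega>) - real k / real N\<bar> \<le> 2 * (1 / real (Suc n))) sequentially"
    show "(\<lambda>N. (1 / real N) * (\<Sum>k=1..N. (\<Sum>j=1..k. t N j \<omega>)\<^sup>2)) \<longlonglongrightarrow> 1 / 3"
    proof (rule det_conv[where x="\<lambda>N k. \<Sum>j=1..k. t N j \<omega>"])
      fix \<epsilon> :: real assume e: "\<epsilon> > 0"
      then obtain n where n: "inverse (real (Suc n)) < \<epsilon> / 2"
        using reals_Archimedean[of "\<epsilon> / 2"] by auto
      have "2 * (1 / real (Suc n)) \<le> \<epsilon>" using n by (simp add: field_simps)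
      then show "eventually (\<lambda>N. \<forall>k\<in>{1..N}. \<bar>(\<Sum>j=1..k. t N j \<omega>) - real k / real N\<bar> \<le> \<epsilon>) sequentially"
        using h[rule_format, of n] by (auto elim!: eventually_mono)
    qed
  qed
qed

end
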